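(* Consider Setting A with all nodes running Algorithm 1, and suppose the graph sequence satisfies conditions (C1) and (C3). Then for every sub-state $j$, every $i\in\mathcal V$ and every $k\ge t_{N-1}$, $$\tau^{(j)}_i[k]\le 2(N-1)\,g(k),$$ where $g(k)=f(m(k))$ with $m(k)=\max\{t_q\in\mathbb I:t_q\le k\}$ and $f(t_q)=t_{q+1}-t_q$.
   Context: Setting A. Consider the discrete-time LTI system $x[k+1]=Ax[k]$, $k\in\mathbb N$, with $A\in\mathbb R^{n\times n}$, monitored by $N$ nodes $\mathcal V=\{1,\dots,N\}$; node $i$ measures $y_i[k]=C_ix[k]$ with $C_i\in\mathbb R^{r_i\times n}$. Let $C=[C_1^T\ \cdots\ C_N^T]^T$ and assume $(A,C)$ is observable. Fix an invertible $T$ such that $\bar A=T^{-1}AT$ is block lower-triangular with diagonal blocks $A_{11},\dots,A_{NN}$ and off-diagonal blocks $A_{jq}$ ($q<j$), zero blocks above the diagonal, and $C_iT=[C_{i1}\ \cdots\ C_{ii}\ 0\ \cdots\ 0]$ for each $i$, with $(A_{jj},C_{jj})$ observable for every $j$ (such $T$ exists). With $z[k]=T^{-1}x[k]$ partitioned compatibly into sub-states $z^{(1)}[k],\dots,z^{(N)}[k]$, one has $z^{(j)}[k+1]=A_{jj}z^{(j)}[k]+\sum_{q=1}^{j-1}A_{jq}z^{(q)}[k]$ and $y_j[k]=\sum_{q=1}^{j}C_{jq}z^{(q)}[k]$. Node $j$ is called the source node of sub-state $j$. Communication: at each time $k$ there is a directed graph $\mathcal G[k]=(\mathcal V,\mathcal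 E[k])$; $(l,i)\in\mathcal E[k]$ means $l$ can send to $i$ at time $k$; $\mathcal N_i[k]=\{l\neq i:(l,i)\in\mathcal E[k]\}$. The union graph over $[k_1,k_2]$ has vertex set $\mathcal V$ and edge set $\bigcup_{\tau=k_1}^{k_2}\mathcal E[\tau]$. Algorithm 1 (run for every sub-state $j$ simultaneously). Each node $i$ keeps an estimate $\hat z^{(j)}_i[k]$ (arbitrary initial value) and a freshness index $\tau^{(j)}_i[k]\in\mathbb N\cup\{\omega\}$, where $\omega$ is a special symbol; initially $\tau^{(j)}_j[0]=0$ and $\tau^{(j)}_i[0]=\omega$ for $i\ne j$. Source node $j$: $\tau^{(j)}_j[k]=0$ for all $k$, and $\hat z^{(j)}_j[k+1]=(A_{jj}-L_jC_{jj})\hat z^{(j)}_j[k]+\sum_{q=1}^{j-1}(A_{jq}-L_jC_{jq})\hat z^{(q)}_j[k]+L_jy_j[k]$, where $L_j$ is an observer gain. Non-source node $i\neq j$ at time $k$: let $\mathcal M^{(j)}_i[k]=\{l\in\mathcal N_i[k]:\tau^{(j)}_l[k]\neq\omega\}$; if $\tau^{(j)}_i[k]=\omega$ let $\mathcal F^{(j)}_i[k]=\mathcal M^{(j)}_i[k]$, otherwise $\mathcal F^{(j)}_i[k]=\{l\in\mathcal M^{(j)}_i[k]:\tau^{(j)}_l[k]<\tau^{(j)}_i[k]\}$. If $\mathcal F^{(j)}_i[k]\ne\emptyset$, pick $u\in\arg\min_{l\in\mathcal F^{(j)}_i[k]}\tau^{(j)}_l[k]$ and set $\tau^{(j)}_i[k+1]=\tau^{(j)}_u[k]+1$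 and $\hat z^{(j)}_i[k+1]=A_{jj}\hat z^{(j)}_u[k]+\sum_{q=1}^{j-1}A_{jq}\hat z^{(q)}_i[k]$ ("$i$ adopts the information of $u$ at time $k$"). If $\mathcal F^{(j)}_i[k]=\emptyset$, set $\tau^{(j)}_i[k+1]=\omega$ if $\tau^{(j)}_i[k]=\omega$ and $\tau^{(j)}_i[k+1]=\tau^{(j)}_i[k]+1$ otherwise, and $\hat z^{(j)}_i[k+1]=A_{jj}\hat z^{(j)}_i[k]+\sum_{q=1}^{j-1}A_{jq}\hat z^{(q)}_i[k]$ ("$i$ adopts its own information"). Conditions on the graph sequence: there is an increasing sequence $\mathbb I=\{t_0,t_1,\dots\}\subset\mathbb N$ with $t_0=0$ such that, with $f(t_q)=t_{q+1}-t_q$: (C1) $f(t_q)$ is non-decreasing in $q$; (C3) for each $q$, the union graph over $[t_q,t_{q+1}-1]$ is strongly connected. *)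

theory Defs
  imports Main
begin

text \<open>A time-varying directed graph is a map
  E :: nat \<Rightarrow> (nat \<times> nat) set; (l,i) \<in> E k means l can send to i at time k.
  The freshness index takes values in nat option, where None encodes the symbol omega.\<close>

definition nbrs :: "nat \<Rightarrow> (nat \<Rightarrow> (nat \<times> nat) set) \<Rightarrow> nat \<Rightarrow> nat \<Rightarrow> nat set" where
  "nbrs N E k i = {l \<in> {1..N}. l \<noteq> i \<and> (l, i) \<in> E k}"

text \<open>One step of the freshness-index update of Algorithm 1 at a non-source node i,
  given the indices prev of all nodes at time k. If F is non-empty, i adopts the
  information of some u minimising tau over F, so its new index is tau_u[k]+1.\<close>

definition tau_update :: "nat \<Rightarrow> (nat \<Rightarrow> (nat \<times> nat) set) \<Rightarrow> nat \<Rightarrow> (nat \<Rightarrow> nat option) \<Rightarrow> nat \<Rightarrow> nat option" where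
  "tau_update N E k prev i =
    (let M = {l \<in> nbrs N E k i. prev l \<noteq> None};
         F = (if prev i = None then M else {l \<in> M. the (prev l) < the (prev i)})
     in if F \<noteq> {} then Some (Min ((\<lambda>l. the (prev l)) ` F) + 1)
        else (case prev i of None \<Rightarrow> None | Some v \<Rightarrow> Some (v + 1)))"

primrec tau :: "nat \<Rightarrow> (nat \<Rightarrow> (nat \<times> nat) set) \<Rightarrow> nat \<Rightarrow> nat \<Rightarrow> nat \<Rightarrow> nat option" where
  "tau N E j 0 = (\<lambda>i. if i = j then Some 0 else None)"
| "tau N E j (Suc k) = (\<lambda>i. if i = j then Some 0 else tau_update N E k (tau N E j k) i)"

definition union_strongly_connected :: "nat \<Rightarrow> (nat \<Rightarrow> (nat \<times> nat) set) \<Rightarrow> nat \<Rightarrow> nat \<Rightarrow> bool" where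
  "union_strongly_connected N E k1 k2 =
    (\<forall>a \<in> {1..N}. \<forall>b \<in> {1..N}. (a, b) \<in> (\<Union>s \<in> {k1..k2}. E s)\<^sup>*)"

text \<open>f(t_q) = t_{q+1} - t_q, indexed by q.\<close>

definition fI :: "(nat \<Rightarrow> nat) \<Rightarrow> nat \<Rightarrow> nat" where
  "fI t q = t (Suc q) - t q"

text \<open>m(k) = t_q with q the largest index such that t_q \<le> k; g(k) = f(m(k)).\<close>

definition mIdx :: "(nat \<Rightarrow> nat) \<Rightarrow> nat \<Rightarrow> nat" where
  "mIdx t k = (GREATEST q. t q \<le> k)"

definition gI :: "(nat \<Rightarrow> nat) \<Rightarrow> nat \<Rightarrow> nat" where
  "gI t k = fI t (mIdx t k)"

end

theory Submission
  imports Defs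
begin

lemma tau_j: "tau N E j k j = Some 0"
  by (cases k) auto

lemma upd_self:
  assumes "prev i = Some v"
  shows "\<exists>w. tau_update N E k prev i = Some w \<and> w \<le> v+1"
proof -
  define M where "M = {l \<in> nbrs N E k i. prev l \<noteq> None}"
  define F where "F = (if prev i = None then M else {l \<in> M. the (prev l) < the (prev i)})"
  have fin: "finite F" unfolding F_def M_def nbrs_def
    by (rule finite_subset[of _ "{1..N}"]) auto
  have eq: "tau_update N E k prev i = (if F \<noteq> {} then Some (Min ((\<lambda>l. the (prev l)) ` F) + 1)
        else (case prev i of None \<Rightarrow> None | Some v \<Rightarrow> Some (v + 1)))"
    unfolding tau_update_def Let_def F_def M_def by simp
  show ?thesis
  proof (cases "F = {}")
    case True then show ?thesis using eq assms by simp
  next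
    case False
    then obtain l where l: "l \<in> F" by blast
    hence "Min ((\<lambda>l. the (prev l)) ` F) \<le> the (prev l)" using fin by (intro Min_le) auto
    moreover have "the (prev l) < v" using l assms F_def by simp
    ultimately show ?thesis using eq False by auto
  qed
qed

lemma upd_nbr:
  assumes "l \<in> nbrs N E k i" "prev l = Some v"
  shows "\<exists>w. tau_update N E k prev i = Some w \<and> w \<le> v+1"
proof -
  define M where "M = {l \<in> nbrs N E k i. prev l \<noteq> None}"
  define F where "F = (if prev i = None then M else {l \<in> M. the (prev l) < the (prev i)})"
  have fin: "finite F" unfolding F_def M_def nbrs_def
    by (rule finite_subset[of _ "{1..N}"]) auto
  have lM: "l \<in> M" using assms M_def by simp
  have eq: "tau_update N E k prev i = (if F \<noteq> {} then Some (Min ((\<lambda>l. the (prev l)) ` F) + 1)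
        else (case prev i of None \<Rightarrow> None | Some v \<Rightarrow> Some (v + 1)))"
    unfolding tau_update_def Let_def F_def M_def by simp
  show ?thesis
  proof (cases "prev i")
    case None
    then have "l \<in> F" using lM F_def by simp
    have "Min ((\<lambda>l. the (prev l)) ` F) \<le> the (prev l)" using fin \<open>l \<in> F\<close> by (intro Min_le) auto
    then show ?thesis using eq \<open>l \<in> F\<close> assms(2) by auto
  next
    case (Some u)
    show ?thesis
    proof (cases "F = {}")
      case True
      then have "\<not> v < u" using lM F_def Some assms(2) by auto
      then show ?thesis using eq True Some by auto
    next
      case False
      then obtain x where x: "x \<in> F" by blast
      have "Min ((\<lambda>l. the (prev l)) ` F) \<le> v"
      proof (cases "v < u")
        case True
        then have "l \<in> F" using lM F_def Some assms(2) by simp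
        then show ?thesis using fin assms(2) by (metis Min_le finite_imageI image_eqI option.sel)
      next
        case False
        have "Min ((\<lambda>l. the (prev l)) ` F) \<le> the (prev x)" using fin x by (intro Min_le) auto
        moreover have "the (prev x) < u" using x F_def Some by simp
        ultimately show ?thesis using False by simp
      qed
      then show ?thesis using eq False by auto
    qed
  qed
qed

inductive reach :: "(nat \<Rightarrow> (nat\<times>nat) set) \<Rightarrow> nat \<Rightarrow> nat \<Rightarrow> nat \<Rightarrow> nat \<Rightarrow> bool" for E j s where
  start: "reach E j s s j"
| wait: "reach E j s k x \<Longrightarrow> reach E j s (Suc k) x"
| move: "reach E j s k l \<Longrightarrow> (l,x) \<in> E k \<Longrightarrow> reach E j s (Suc k) x"

lemma reach_le: "reach E j s k x \<Longrightarrow> s \<le> k"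
  by (induction rule: reach.induct) auto

lemma reach_mono:
  assumes r: "reach E j s k x" and kk: "k \<le> k'" shows "reach E j s k' x"
  using kk by (induction k' rule: dec_induct) (auto intro: reach.wait r)

lemma reach_start: "s \<le> k \<Longrightarrow> reach E j s k j"
  using reach_mono reach.start by blast

lemma reach_mem:
  assumes edges: "\<And>k. E k \<subseteq> {1..N} \<times> {1..N}" and j: "j \<in> {1..N}"
  shows "reach E j s k x \<Longrightarrow> x \<in> {1..N}"
proof (induction rule: reach.induct)
  case start then show ?case using j .
next
  case (wait k x) then show ?case by blast
next
  case (move k l x) then show ?case using edges[of k] by blast
qed

lemma reach_tau:
  assumes edges: "\<And>k. E k \<subseteq> {1..N} \<times> {1..N}" and j: "j \<in> {1..N}"
  shows "reach E j s k x \<Longrightarrow> \<exists>w. tau N E j k x = Some w \<and> w \<le> k - s"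
proof (induction rule: reach.induct)
  case start
  then show ?case using tau_j by auto
next
  case (wait k x)
  have sk: "s \<le> k" using wait.hyps reach_le by blast
  show ?case
  proof (cases "x = j")
    case True then show ?thesis using tau_j by auto
  next
    case False
    obtain w where w: "tau N E j k x = Some w" "w \<le> k - s" using wait.IH by blast
    obtain w' where "tau_update N E k (tau N E j k) x = Some w'" "w' \<le> w+1"
      using upd_self[of "tau N E j k" x w N E k] w(1) by blast
    then show ?thesis using False w sk by auto
  qed
next
  case (move k l x)
  have sk: "s \<le> k" using move.hyps reach_le by blast
  obtain w where w: "tau N E j k l = Some w" "w \<le> k - s" using move.IH by blast
  show ?case
  proof (cases "x = j")
    case True then show ?thesis using tau_j by auto
  next
    case False
    have "\<exists>w'. tau_update N E k (tau N E j k) x = Some w' \<and> w' \<le> w+1"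
    proof (cases "l = x")
      case True then show ?thesis using upd_self[of "tau N E j k" x w N E k] w(1) by simp
    next
      case False
      have "l \<in> nbrs N E k x" using False move.hyps edges[of k] unfolding nbrs_def by blast
      then show ?thesis using upd_nbr[of l N E k x "tau N E j k" w] w(1) by blast
    qed
    then show ?thesis using False w sk by auto
  qed
qed

lemma rtrancl_cross:
  "(a,b) \<in> R\<^sup>* \<Longrightarrow> a \<in> A \<Longrightarrow> b \<notin> A \<Longrightarrow> \<exists>u w. (u,w) \<in> R \<and> u \<in> A \<and> w \<notin> A"
proof (induction rule: rtrancl_induct)
  case base then show ?case by simp
next
  case (step y z)
  show ?case
  proof (cases "y \<in> A")
    case True then show ?thesis using step.hyps(2) step.prems(2) by blast
  next
    case False then show ?thesis using step.IH step.prems(1) by blast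
  qed
qed

lemma spread:
  assumes edges: "\<And>k. E k \<subseteq> {1..N} \<times> {1..N}" and j: "j \<in> {1..N}"
    and C3: "union_strongly_connected N E (t p) (t (Suc p) - 1)"
    and tp: "t p < t (Suc p)" and a: "a \<le> t p"
    and y: "y \<in> {1..N}" "\<not> reach E j a (t p) y"
  shows "\<exists>w. \<not> reach E j a (t p) w \<and> reach E j a (t (Suc p)) w"
proof -
  have "(j,y) \<in> (\<Union>s \<in> {t p..t (Suc p) - 1}. E s)\<^sup>*"
    using C3 j y unfolding union_strongly_connected_def by blast
  moreover have "j \<in> {x. reach E j a (t p) x}" using reach_start a by blast
  moreover have "y \<notin> {x. reach E j a (t p) x}" using y by simp
  ultimately obtain u w where uw0: "(u,w) \<in> (\<Union>s \<in> {t p..t (Suc p) - 1}. E s)"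
    "u \<in> {x. reach E j a (t p) x}" "w \<notin> {x. reach E j a (t p) x}"
    using rtrancl_cross[of j y "\<Union>s \<in> {t p..t (Suc p) - 1}. E s" "{x. reach E j a (t p) x}"] by blast
  hence uw: "(u,w) \<in> (\<Union>s \<in> {t p..t (Suc p) - 1}. E s)"
    "reach E j a (t p) u" "\<not> reach E j a (t p) w" by auto
  then obtain s where s: "s \<in> {t p..t (Suc p) - 1}" "(u,w) \<in> E s" by blast
  have "reach E j a s u" using reach_mono uw(2) s(1) by auto
  hence "reach E j a (Suc s) w" using s(2) reach.move by blast
  moreover have "Suc s \<le> t (Suc p)" using s(1) tp by auto
  ultimately show ?thesis using uw(3) reach_mono by blast
qed

lemma card_grow:
  assumes edges: "\<And>k. E k \<subseteq> {1..N} \<times> {1..N}" and j: "j \<in> {1..N}"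
    and C3: "\<And>q. union_strongly_connected N E (t q) (t (Suc q) - 1)"
    and t_incr: "strict_mono t"
  shows "min N (Suc n) \<le> card {x. reach E j (t p0) (t (p0+n)) x}"
proof (induction n)
  case 0
  have sub0: "{x. reach E j (t p0) (t (p0+0)) x} \<subseteq> {1..N}"
    using reach_mem[where E=E and N=N, OF edges j] by blast
  have fin: "finite {x. reach E j (t p0) (t (p0+0)) x}" using finite_subset[OF sub0] by simp
  have "j \<in> {x. reach E j (t p0) (t (p0+0)) x}" using reach.start by simp
  hence "card {x. reach E j (t p0) (t (p0+0)) x} > 0" using fin card_gt_0_iff by blast
  then show ?case by simp
next
  case (Suc n)
  let ?S = "{x. reach E j (t p0) (t (p0+n)) x}"
  let ?T = "{x. reach E j (t p0) (t (p0+Suc n)) x}"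
  have subT: "?T \<subseteq> {1..N}"
    using reach_mem[where E=E and N=N, OF edges j] by blast
  have finT: "finite ?T" using finite_subset[OF subT] by simp
  have tlt: "t (p0+n) < t (Suc (p0+n))" using t_incr by (simp add: strict_mono_def)
  have sub: "?S \<subseteq> ?T"
  proof
    fix x assume "x \<in> ?S"
    then show "x \<in> ?T" using reach_mono[of E j "t p0" "t (p0+n)" x "t (p0 + Suc n)"] tlt by simp
  qed
  have subS: "?S \<subseteq> {1..N}" using reach_mem[where E=E and N=N, OF edges j] by blast
  show ?case
  proof (cases "{1..N} \<subseteq> ?S")
    case True
    then have "?T = {1..N}" using sub subT by blast
    then show ?thesis by simp
  next
    case False
    then obtain y where y: "y \<in> {1..N}" "\<not> reach E j (t p0) (t (p0+n)) y" by blast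
    have a: "t p0 \<le> t (p0+n)" using t_incr by (simp add: strict_mono_less_eq)
    obtain w where w: "\<not> reach E j (t p0) (t (p0+n)) w" "reach E j (t p0) (t (Suc (p0+n))) w"
      using spread[where E=E and N=N and t=t and p="p0+n", OF edges j C3 tlt a y] by blast
    have "insert w ?S \<subseteq> ?T" using sub w by auto
    hence "card (insert w ?S) \<le> card ?T" using finT card_mono by blast
    moreover have "card (insert w ?S) = Suc (card ?S)"
      using w(1) finite_subset[OF subS] by simp
    ultimately show ?thesis using Suc.IH by simp
  qed
qed

lemma all_reached:
  assumes edges: "\<And>k. E k \<subseteq> {1..N} \<times> {1..N}" and j: "j \<in> {1..N}"
    and C3: "\<And>q. union_strongly_connected N E (t q) (t (Suc q) - 1)"
    and t_incr: "strict_mono t" and i: "i \<in> {1..N}"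
  shows "reach E j (t p0) (t (p0 + (N - 1))) i"
proof -
  let ?S = "{x. reach E j (t p0) (t (p0+(N-1))) x}"
  have subS: "?S \<subseteq> {1..N}" using reach_mem[where E=E and N=N, OF edges j] by auto
  have "min N (Suc (N-1)) \<le> card ?S" using card_grow[where E=E and N=N and t=t, OF edges j C3 t_incr] by blast
  moreover have "Suc (N-1) = N" using j by auto
  ultimately have "N \<le> card ?S" by simp
  moreover have "card ?S \<le> N" using card_mono[OF _ subS] by simp
  ultimately have "card ?S = card {1..N}" by simp
  hence "?S = {1..N}" using card_subset_eq[OF _ subS] by simp
  then show ?thesis using i by auto
qed

lemma t_sum:
  assumes t_incr: "strict_mono t" and C1: "\<And>q. fI t q \<le> fI t (Suc q)"
  shows "p0 + n \<le> Suc q \<Longrightarrow> t (p0+n) \<le> t p0 + n * fI t q"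
proof (induction n)
  case 0 then show ?case by simp
next
  case (Suc n)
  have mono: "fI t (p0+n) \<le> fI t q"
    using lift_Suc_mono_le[of "fI t", OF C1] Suc.prems by simp
  have "t (Suc (p0+n)) = t (p0+n) + fI t (p0+n)"
    using t_incr unfolding fI_def strict_mono_def
    by (metis add_diff_inverse_nat lessI not_less_iff_gr_or_eq)
  then show ?case using Suc mono by simp
qed

lemma sm_ge: "strict_mono (t::nat\<Rightarrow>nat) \<Longrightarrow> n \<le> t n"
proof (induction n)
  case 0 then show ?case by simp
next
  case (Suc n)
  have "t n < t (Suc n)" using Suc.prems by (simp add: strict_mono_def)
  then show ?case using Suc by simp
qed

theorem mainTheorem7:
  fixes N :: nat and E :: "nat \<Rightarrow> (nat \<times> nat) set" and t :: "nat \<Rightarrow> nat"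
  assumes edges: "\<And>k. E k \<subseteq> {1..N} \<times> {1..N}"
    and t_incr: "strict_mono t"
    and t0: "t 0 = 0"
    and C1: "\<And>q. fI t q \<le> fI t (Suc q)"
    and C3: "\<And>q. union_strongly_connected N E (t q) (t (Suc q) - 1)"
  shows "\<forall>j \<in> {1..N}. \<forall>i \<in> {1..N}. \<forall>k \<ge> t (N - 1).
           \<exists>v. tau N E j k i = Some v \<and> v \<le> 2 * (N - 1) * gI t k"
proof (intro ballI allI impI)
  fix j i k assume j: "j \<in> {1..N}" and i: "i \<in> {1..N}" and k: "k \<ge> t (N - 1)"
  show "\<exists>v. tau N E j k i = Some v \<and> v \<le> 2 * (N - 1) * gI t k"
  proof (cases "i = j")
    case True then show ?thesis using tau_j by simp
  next
    case False
    then have N2: "N \<ge> 2" using i j by auto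
    define q where "q = mIdx t k"
    have bnd: "y \<le> k" if "t y \<le> k" for y
      using sm_ge[OF t_incr, of y] that by linarith
    have tq: "t q \<le> k" unfolding q_def mIdx_def
      by (rule GreatestI_nat[of "\<lambda>q. t q \<le> k" 0 k]) (simp add: t0, rule bnd)
    have qN: "N - 1 \<le> q" unfolding q_def mIdx_def
      by (rule Greatest_le_nat[of "\<lambda>q. t q \<le> k" "N - 1" k]) (rule k, rule bnd)
    have kq: "k < t (Suc q)"
    proof (rule ccontr)
      assume "\<not> k < t (Suc q)"
      hence "t (Suc q) \<le> k" by simp
      hence "Suc q \<le> q" unfolding q_def mIdx_def
        by (rule Greatest_le_nat[of "\<lambda>q. t q \<le> k" _ k]) (rule bnd)
      then show False by simp
    qed
    define p0 where "p0 = q - (N - 1)"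
    have pq: "p0 + (N - 1) = q" using qN p0_def by simp
    have r: "reach E j (t p0) (t q) i" using all_reached[where E=E and N=N and t=t, OF edges j C3 t_incr i, of p0] pq by simp
    hence "reach E j (t p0) k i" using reach_mono tq by blast
    then obtain w where w: "tau N E j k i = Some w" "w \<le> k - t p0"
      using reach_tau[where E=E and N=N, OF edges j] by blast
    have "t (p0 + N) \<le> t p0 + N * fI t q"
      using t_sum[where t=t, OF t_incr C1] pq N2 by simp
    moreover have "p0 + N = Suc q" using pq N2 by simp
    ultimately have "k < t p0 + N * fI t q" using kq by simp
    hence "k - t p0 \<le> N * fI t q" by simp
    also have "\<dots> \<le> 2 * (N - 1) * fI t q" using N2 by (intro mult_right_mono) auto
    finally show ?thesis using w unfolding gI_def q_def by auto
  qed
qed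

end
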